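(* Let $\lambda>0$, let $E_1,E_2,\ldots$ be i.i.d. $\text{Exp}(\lambda)$ random variables, and let $$X=\prod_{i=1}^{\infty}\min\left\{\sum_{k=1}^iE_k,1\right\}.$$ Then for every $t\in(0,1)$, $$\mathbb{P}(X\le t)=\mathbb{P}(N>N^* ),$$ where $N\sim\text{Pois}(\lambda)$ and $N^*\sim\text{Pois}(-\log t)$ are independent.
   Context: $\text{Exp}(\lambda)$ denotes the exponential distribution with rate $\lambda$ (mean $1/\lambda$); $\text{Pois}(\mu)$ denotes the Poisson distribution with mean $\mu$. *)

theory Defs
  imports "HOL-Probability.Probability"
begin

definition poisson_pmf :: "real \<Rightarrow> nat pmf" where
  "poisson_pmf mu = embed_pmf (\<lambda>k. exp (- mu) * mu ^ k / fact k)"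

end

theory Submission
  imports Defs
begin


definition Kd :: "nat \<Rightarrow> real \<Rightarrow> real \<Rightarrow> real" where
  "Kd n u y = (if u ^ (n+1) \<le> y then u ^ n / fact n
     else (y / u) / fact n * (\<Sum>j<n. ((real n + 1) * ln u - ln y) ^ j / fact j))"

lemma Kd_nonneg: assumes "0 < u" "0 < y" shows "0 \<le> Kd n u y"
proof (cases "u ^ (n+1) \<le> y")
  case True then show ?thesis using assms by (simp add: Kd_def)
next
  case False
  then have "ln y < ln (u ^ (n+1))" using assms by simp
  moreover have "ln (u ^ (n+1)) = (n+1) * ln u" using ln_realpow[of u "n+1"] assms by simp
  ultimately have "ln y < (real n + 1) * ln u" by (simp add: add.commute)
  then have "0 \<le> (\<Sum>j<n. ((real n + 1) * ln u - ln y) ^ j / fact j)"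
    by (intro sum_nonneg) auto
  moreover have "Kd n u y = (y / u) / fact n * (\<Sum>j<n. ((real n + 1) * ln u - ln y) ^ j / fact j)"
    unfolding Kd_def using False by (simp only: if_False)
  ultimately show ?thesis using assms by simp
qed

lemma Kd_measurable[measurable]: "(\<lambda>u. Kd n u y) \<in> borel_measurable borel"
  unfolding Kd_def by measurable

lemma ID_case1:
  fixes v w :: real and n :: nat
  assumes v: "0 < v" and w: "0 < w" and le: "v ^ (n+1) \<le> w"
  shows "(\<integral>\<^sup>+u. ennreal (Kd n u w) * indicator {0<..v} u \<partial>lborel) = ennreal (v ^ (n+1) / fact (n+1))"
proof -
  have "(\<integral>\<^sup>+u. ennreal (Kd n u w) * indicator {0<..v} u \<partial>lborel)
      = (\<integral>\<^sup>+u. ennreal (u ^ n / fact n) * indicator {0..v} u \<partial>lborel)"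
  proof (rule nn_integral_cong_AE)
    show "AE u in lborel. ennreal (Kd n u w) * indicator {0<..v} u = ennreal (u ^ n / fact n) * indicator {0..v} u"
      using AE_lborel_singleton[of 0]
    proof eventually_elim
      case (elim u)
      show ?case
      proof (cases "0 < u \<and> u \<le> v")
        case True
        then have "u ^ (n+1) \<le> v ^ (n+1)" by (intro power_mono) auto
        with le have "u ^ (n+1) \<le> w" by linarith
        then show ?thesis using True by (simp add: Kd_def indicator_def del: power_Suc)
      next
        case False then show ?thesis using elim by (auto simp: indicator_def)
      qed
    qed
  qed
  also have "\<dots> = ennreal (v ^ (n+1) / fact (n+1) - 0 ^ (n+1) / fact (n+1))"
  proof (rule nn_integral_FTC_Icc)
    show "(\<lambda>u::real. u ^ n / fact n) \<in> borel_measurable borel" by measurable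
    fix x :: real assume "x \<in> {0..v}"
    show "((\<lambda>u. u ^ (n+1) / fact (n+1)) has_real_derivative x ^ n / fact n) (at x)"
    proof -
      have "((\<lambda>u. u ^ (n+1) / fact (n+1)) has_real_derivative (real (n+1) * x ^ n) / fact (n+1)) (at x)"
        using DERIV_pow[of "n+1" x] by (intro DERIV_cdivide) simp
      moreover have "(real (n+1) * x ^ n) / fact (n+1) = x ^ n / fact n"
        by (simp del: of_nat_Suc add: field_simps)
      ultimately show ?thesis by simp
    qed
    show "0 \<le> x ^ n / fact n" using \<open>x \<in> {0..v}\<close> by auto
  qed (use v in auto)
  finally show ?thesis by simp
qed

lemma FTC_pow:
  fixes a :: real assumes "0 \<le> a"
  shows "(\<integral>\<^sup>+u. ennreal (u ^ n / fact n) * indicator {0..a} u \<partial>lborel) = ennreal (a ^ (n+1) / fact (n+1))"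
proof -
  have "(\<integral>\<^sup>+u. ennreal (u ^ n / fact n) * indicator {0..a} u \<partial>lborel) = ennreal (a ^ (n+1) / fact (n+1) - 0 ^ (n+1) / fact (n+1))"
  proof (rule nn_integral_FTC_Icc)
    show "(\<lambda>u::real. u ^ n / fact n) \<in> borel_measurable borel" by measurable
    fix x :: real assume "x \<in> {0..a}"
    show "((\<lambda>u. u ^ (n+1) / fact (n+1)) has_real_derivative x ^ n / fact n) (at x)"
    proof -
      have "((\<lambda>u. u ^ (n+1) / fact (n+1)) has_real_derivative (real (n+1) * x ^ n) / fact (n+1)) (at x)"
        using DERIV_pow[of "n+1" x] by (intro DERIV_cdivide) simp
      moreover have "(real (n+1) * x ^ n) / fact (n+1) = x ^ n / fact n"
        by (simp del: of_nat_Suc add: field_simps)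
      ultimately show ?thesis by simp
    qed
    show "0 \<le> x ^ n / fact n" using \<open>x \<in> {0..a}\<close> by auto
  qed (use assms in auto)
  then show ?thesis by simp
qed

lemma deriv_term:
  fixes x w :: real and n j :: nat
  assumes "0 < x"
  shows "((\<lambda>x. ((real n + 1) * ln x - ln w) ^ Suc j / ((real n + 1) * fact (Suc j)))
          has_real_derivative ((real n + 1) * ln x - ln w) ^ j / (x * fact j)) (at x)"
proof -
  have "((\<lambda>x. ((real n + 1) * ln x - ln w) ^ Suc j / ((real n + 1) * fact (Suc j)))
          has_real_derivative ((1 + real j) * (((real n + 1) / x) * ((real n + 1) * ln x - ln w) ^ j)) / ((real n + 1) * fact (Suc j))) (at x)"
  proof (intro DERIV_cdivide DERIV_power_Suc)
    show "((\<lambda>x. (real n + 1) * ln x - ln w) has_real_derivative (real n + 1) / x) (at x)"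
      using assms by (auto intro!: derivative_eq_intros)
  qed
  moreover have "((1 + real j) * (((real n + 1) / x) * ((real n + 1) * ln x - ln w) ^ j)) / ((real n + 1) * fact (Suc j))
     = ((real n + 1) * ln x - ln w) ^ j / (x * fact j)"
  proof -
    have f: "fact (Suc j) = (1 + real j) * (fact j :: real)" by simp
    have "(real n + 1) \<noteq> 0" "(1 + real j) \<noteq> 0" "x \<noteq> 0" "(fact j :: real) \<noteq> 0" using assms by auto
    then show ?thesis unfolding f by (simp only: field_simps) simp
  qed
  ultimately show ?thesis by simp
qed

lemma ID_case2:
  fixes v w :: real and n :: nat
  assumes v: "0 < v" and w: "0 < w" and gt: "w < v ^ (n+1)"
  shows "(\<integral>\<^sup>+u. ennreal (Kd n u w) * indicator {0<..v} u \<partial>lborel)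
    = ennreal (w / fact (n+1) * (\<Sum>j<n+1. ((real n + 1) * ln v - ln w) ^ j / fact j))"
proof -
  define c where "c = exp (ln w / (real n + 1))"
  have c0: "0 < c" by (simp add: c_def)
  have lnc: "ln c = ln w / (real n + 1)" by (simp add: c_def)
  have cpow: "c ^ (n+1) = w"
  proof -
    have "c ^ (n+1) = exp (real (n+1) * (ln w / (real n + 1)))"
      unfolding c_def by (simp only: exp_of_nat_mult)
    also have "real (n+1) * (ln w / (real n + 1)) = ln w" by (simp add: add.commute)
    also have "exp (ln w) = w" using w by simp
    finally show ?thesis .
  qed
  have cv: "c < v"
    using gt cpow v by (metis power_less_imp_less_base less_le)
  have iff: "u ^ (n+1) \<le> w \<longleftrightarrow> u \<le> c" if "0 < u" for u
  proof
    assume "u ^ (n+1) \<le> w"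
    then have "u ^ (n+1) \<le> c ^ (n+1)" using cpow by simp
    then show "u \<le> c" using power_le_imp_le_base[of u n c] c0 by simp
  next
    assume "u \<le> c"
    then show "u ^ (n+1) \<le> w" using cpow that by (metis power_mono less_imp_le)
  qed
  define g2 where "g2 u = (w / u) / fact n * (\<Sum>j<n. ((real n + 1) * ln u - ln w) ^ j / fact j)" for u
  define F where "F u = w / fact n * (\<Sum>j<n. ((real n + 1) * ln u - ln w) ^ Suc j / ((real n + 1) * fact (Suc j)))" for u
  have "(\<integral>\<^sup>+u. ennreal (Kd n u w) * indicator {0<..v} u \<partial>lborel)
      = (\<integral>\<^sup>+u. ennreal (u ^ n / fact n) * indicator {0..c} u + ennreal (g2 u) * indicator {c..v} u \<partial>lborel)"
  proof (rule nn_integral_cong_AE)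
    show "AE u in lborel. ennreal (Kd n u w) * indicator {0<..v} u = ennreal (u ^ n / fact n) * indicator {0..c} u + ennreal (g2 u) * indicator {c..v} u"
      using AE_lborel_singleton[of 0] AE_lborel_singleton[of c]
    proof eventually_elim
      case (elim u)
      consider "u < 0" | "0 < u" "u < c" | "c < u" "u \<le> v" | "v < u" using elim by linarith
      then show ?case
      proof cases
        case 2
        then have "u ^ (n+1) \<le> w" using iff by auto
        then show ?thesis using 2 cv by (simp add: Kd_def indicator_def del: power_Suc)
      next
        case 3
        then have "\<not> u ^ (n+1) \<le> w" using iff c0 by auto
        then show ?thesis using 3 c0 by (simp add: Kd_def g2_def indicator_def del: power_Suc)
      qed (use cv c0 in \<open>auto simp: indicator_def\<close>)
    qed
  qed
  also have "\<dots> = (\<integral>\<^sup>+u. ennreal (u ^ n / fact n) * indicator {0..c} u \<partial>lborel) + (\<integral>\<^sup>+u. ennreal (g2 u) * indicator {c..v} u \<partial>lborel)"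
    by (rule nn_integral_add) (auto simp: g2_def)
  also have "(\<integral>\<^sup>+u. ennreal (u ^ n / fact n) * indicator {0..c} u \<partial>lborel) = ennreal (w / fact (n+1))"
    using FTC_pow[of c n] c0 cpow by simp
  also have "(\<integral>\<^sup>+u. ennreal (g2 u) * indicator {c..v} u \<partial>lborel) = ennreal (F v - F c)"
  proof (rule nn_integral_FTC_Icc)
    show "g2 \<in> borel_measurable borel" unfolding g2_def by measurable
    fix x assume x: "x \<in> {c..v}"
    then have x0: "0 < x" using c0 by auto
    have "((\<lambda>x. w / fact n * (\<Sum>j<n. ((real n + 1) * ln x - ln w) ^ Suc j / ((real n + 1) * fact (Suc j))))
       has_real_derivative w / fact n * (\<Sum>j<n. ((real n + 1) * ln x - ln w) ^ j / (x * fact j))) (at x)"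
      by (intro DERIV_cmult DERIV_sum deriv_term x0)
    moreover have "w / fact n * (\<Sum>j<n. ((real n + 1) * ln x - ln w) ^ j / (x * fact j)) = g2 x"
    proof -
      have "(\<Sum>j<n. ((real n + 1) * ln x - ln w) ^ j / (x * fact j)) = (\<Sum>j<n. ((real n + 1) * ln x - ln w) ^ j / fact j) / x"
        unfolding sum_divide_distrib by (rule sum.cong) (use x0 in auto)
      then show ?thesis unfolding g2_def by simp
    qed
    ultimately show "(F has_real_derivative g2 x) (at x)" unfolding F_def[abs_def] by simp
    have "ln c \<le> ln x" using x c0 by simp
    then have "ln w \<le> (real n + 1) * ln x" using lnc by (simp add: field_simps)
    then have "0 \<le> (\<Sum>j<n. ((real n + 1) * ln x - ln w) ^ j / fact j)" by (intro sum_nonneg) auto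
    then show "0 \<le> g2 x" unfolding g2_def using x0 w by simp
  qed (use cv in auto)
  also have "F c = 0" unfolding F_def lnc using w by simp
  also have "ennreal (w / fact (n+1)) + ennreal (F v - 0) = ennreal (w / fact (n+1) + F v)"
  proof -
    have h1: "0 \<le> w / fact (n+1)" using w by simp
    have "ln c \<le> ln v" using cv c0 by simp
    then have "ln w \<le> (real n + 1) * ln v" using lnc by (simp add: field_simps)
    then have h2: "0 \<le> F v" unfolding F_def using w by (auto intro!: sum_nonneg mult_nonneg_nonneg divide_nonneg_nonneg)
    show ?thesis using h1 h2 by (simp add: ennreal_plus)
  qed
  also have "w / fact (n+1) + F v = w / fact (n+1) * (\<Sum>j<n+1. ((real n + 1) * ln v - ln w) ^ j / fact j)"
  proof -
    have hs: "(\<Sum>j<n+1. ((real n + 1) * ln v - ln w) ^ j / fact j) = 1 + (\<Sum>j<n. ((real n + 1) * ln v - ln w) ^ Suc j / fact (Suc j))"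
      by (simp only: Suc_eq_plus1[symmetric] sum.lessThan_Suc_shift) simp
    have hF: "F v = w / fact (n+1) * (\<Sum>j<n. ((real n + 1) * ln v - ln w) ^ Suc j / fact (Suc j))"
      unfolding F_def by (simp add: sum_distrib_left field_simps)
    show ?thesis unfolding hs hF by (simp only: distrib_left mult_1_right)
  qed
  finally show ?thesis .
qed

lemma ID:
  fixes v y :: real and n :: nat
  assumes v: "0 < v" and y: "0 < y"
  shows "(\<integral>\<^sup>+u. ennreal (Kd n u (y / v)) * indicator {0<..v} u \<partial>lborel) = ennreal (Kd (Suc n) v y)"
proof (cases "v ^ (n+1) \<le> y / v")
  case True
  then have "v ^ (Suc n + 1) \<le> y" using v by (simp add: field_simps)
  then have "Kd (Suc n) v y = v ^ (n+1) / fact (n+1)" by (simp add: Kd_def del: power_Suc fact_Suc)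
  then show ?thesis using ID_case1[OF v _ True] v y by simp
next
  case False
  then have "\<not> v ^ (Suc n + 1) \<le> y" using v by (simp add: field_simps)
  then have "Kd (Suc n) v y = (y / v) / fact (Suc n) * (\<Sum>j<Suc n. ((real (Suc n) + 1) * ln v - ln y) ^ j / fact j)"
    unfolding Kd_def by (simp only: if_False)
  also have "\<dots> = y / v / fact (n+1) * (\<Sum>j<n+1. ((real n + 1) * ln v - ln (y / v)) ^ j / fact j)"
    using v y by (simp add: ln_div algebra_simps)
  finally show ?thesis using ID_case2[of v "y/v" n] False v y by simp
qed



definition Ssum :: "(nat \<Rightarrow> 'a \<Rightarrow> real) \<Rightarrow> nat \<Rightarrow> 'a \<Rightarrow> real" where
  "Ssum E n \<omega> = (\<Sum>k\<le>n. E k \<omega>)"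
definition Pprod :: "(nat \<Rightarrow> 'a \<Rightarrow> real) \<Rightarrow> nat \<Rightarrow> 'a \<Rightarrow> real" where
  "Pprod E n \<omega> = (\<Prod>i<n. Ssum E i \<omega>)"

locale expseq = prob_space +
  fixes E :: "nat \<Rightarrow> 'a \<Rightarrow> real" and l :: real
  assumes l: "0 < l" and ind: "indep_vars (\<lambda>_. borel) E UNIV"
    and dist: "\<And>i. distributed M lborel (E i) (exponential_density l)"
begin

lemma E_meas[measurable]: "E i \<in> borel_measurable M"
  using distributed_measurable[OF dist[of i]] by simp

lemma S_meas[measurable]: "Ssum E n \<in> borel_measurable M"
  unfolding Ssum_def[abs_def] by measurable

lemma P_meas[measurable]: "Pprod E n \<in> borel_measurable M"
  unfolding Pprod_def[abs_def] by measurable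

lemma IS:
  fixes G :: "real \<times> real \<times> real \<Rightarrow> ennreal"
  assumes G[measurable]: "G \<in> borel_measurable borel"
  shows "(\<integral>\<^sup>+\<omega>. G (Ssum E n \<omega>, Pprod E (Suc n) \<omega>, E (Suc n) \<omega>) \<partial>M)
    = (\<integral>\<^sup>+\<omega>. (\<integral>\<^sup>+x. ennreal (exponential_density l x) * G (Ssum E n \<omega>, Pprod E (Suc n) \<omega>, x) \<partial>lborel) \<partial>M)"
proof -
  define Z where "Z \<omega> = (Ssum E n \<omega>, Pprod E (Suc n) \<omega>)" for \<omega>
  define W where "W \<omega> = (E (Suc n) \<omega>, 0::real)" for \<omega>
  have [measurable]: "Z \<in> borel_measurable M" unfolding Z_def[abs_def] by measurable
  have [measurable]: "W \<in> borel_measurable M" unfolding W_def[abs_def] by measurable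
  have iv: "indep_var (PiM {..n} (\<lambda>_. borel)) (\<lambda>\<omega>. restrict (\<lambda>i. E i \<omega>) {..n})
                 (PiM {Suc n} (\<lambda>_. borel)) (\<lambda>\<omega>. restrict (\<lambda>i. E i \<omega>) {Suc n})"
    by (rule indep_var_restrict[OF ind]) auto
  define Y1 where "Y1 f = ((\<Sum>k\<le>n. f k), (\<Prod>i<Suc n. \<Sum>k\<le>i. f k))" for f :: "nat \<Rightarrow> real"
  define Y2 where "Y2 f = (f (Suc n), 0::real)" for f :: "nat \<Rightarrow> real"
  have Y1m: "Y1 \<in> measurable (PiM {..n} (\<lambda>_. borel)) borel"
    unfolding Y1_def by measurable
  have Y2m: "Y2 \<in> measurable (PiM {Suc n} (\<lambda>_. borel)) borel"
    unfolding Y2_def by measurable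
  have "indep_var borel (Y1 \<circ> (\<lambda>\<omega>. restrict (\<lambda>i. E i \<omega>) {..n})) borel (Y2 \<circ> (\<lambda>\<omega>. restrict (\<lambda>i. E i \<omega>) {Suc n}))"
    by (rule indep_var_compose[OF iv Y1m Y2m])
  moreover have "Y1 \<circ> (\<lambda>\<omega>. restrict (\<lambda>i. E i \<omega>) {..n}) = Z"
    by (auto simp: Y1_def Z_def Ssum_def Pprod_def fun_eq_iff intro!: sum.cong prod.cong)
  moreover have "Y2 \<circ> (\<lambda>\<omega>. restrict (\<lambda>i. E i \<omega>) {Suc n}) = W"
    by (auto simp: Y2_def W_def fun_eq_iff)
  ultimately have ivZW: "indep_var borel Z borel W" by simp
  then have eq: "distr M borel Z \<Otimes>\<^sub>M distr M borel W = distr M (borel \<Otimes>\<^sub>M borel) (\<lambda>x. (Z x, W x))"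
    using indep_var_distribution_eq by blast
  interpret W: prob_space "distr M borel W" by (rule prob_space_distr) simp
  define G' where "G' = (\<lambda>(z :: real \<times> real, x :: real \<times> real). G (fst z, snd z, fst x))"
  have Gm[measurable]: "G \<in> borel_measurable (borel \<Otimes>\<^sub>M (borel \<Otimes>\<^sub>M borel))" using G by (simp add: borel_prod)
  have "G' \<in> borel_measurable ((borel \<Otimes>\<^sub>M borel) \<Otimes>\<^sub>M (borel \<Otimes>\<^sub>M borel))" unfolding G'_def by measurable
  then have [measurable]: "G' \<in> borel_measurable (borel \<Otimes>\<^sub>M borel)" by (simp add: borel_prod)
  have "(\<integral>\<^sup>+\<omega>. G (Ssum E n \<omega>, Pprod E (Suc n) \<omega>, E (Suc n) \<omega>) \<partial>M) = (\<integral>\<^sup>+\<omega>. G' (Z \<omega>, W \<omega>) \<partial>M)"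
    by (simp add: G'_def Z_def W_def)
  also have "\<dots> = (\<integral>\<^sup>+p. G' p \<partial>distr M (borel \<Otimes>\<^sub>M borel) (\<lambda>x. (Z x, W x)))"
    by (subst nn_integral_distr) auto
  also have "\<dots> = (\<integral>\<^sup>+p. G' p \<partial>(distr M borel Z \<Otimes>\<^sub>M distr M borel W))"
    by (simp add: eq)
  also have "\<dots> = (\<integral>\<^sup>+z. \<integral>\<^sup>+x. G' (z, x) \<partial>distr M borel W \<partial>distr M borel Z)"
    by (rule W.nn_integral_fst[symmetric]) simp
  also have "\<dots> = (\<integral>\<^sup>+\<omega>. \<integral>\<^sup>+x. G' (Z \<omega>, x) \<partial>distr M borel W \<partial>M)"
    by (subst nn_integral_distr) (auto intro!: W.borel_measurable_nn_integral_fst)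
  also have "\<dots> = (\<integral>\<^sup>+\<omega>. (\<integral>\<^sup>+x. ennreal (exponential_density l x) * G (Ssum E n \<omega>, Pprod E (Suc n) \<omega>, x) \<partial>lborel) \<partial>M)"
  proof (rule nn_integral_cong)
    fix \<omega> assume "\<omega> \<in> space M"
    have "(\<integral>\<^sup>+x. G' (Z \<omega>, x) \<partial>distr M borel W) = (\<integral>\<^sup>+\<omega>'. G' (Z \<omega>, W \<omega>') \<partial>M)"
      by (subst nn_integral_distr) auto
    also have "\<dots> = (\<integral>\<^sup>+x. ennreal (exponential_density l x) * G' (Z \<omega>, (x, 0)) \<partial>lborel)"
    proof -
      have gm: "(\<lambda>x. G (fst (Z \<omega>), snd (Z \<omega>), x)) \<in> borel_measurable lborel"
        unfolding measurable_lborel2 by measurable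
      show ?thesis unfolding W_def G'_def
        using distributed_nn_integral[OF dist gm, symmetric] by simp
    qed
    finally show "(\<integral>\<^sup>+x. G' (Z \<omega>, x) \<partial>distr M borel W) = (\<integral>\<^sup>+x. ennreal (exponential_density l x) * G (Ssum E n \<omega>, Pprod E (Suc n) \<omega>, x) \<partial>lborel)"
      by (simp add: G'_def Z_def)
  qed
  finally show ?thesis .
qed

lemma ed_meas[measurable]: "(\<lambda>x. exponential_density l x) \<in> borel_measurable borel"
  by (simp only: exponential_density_def) measurable

lemma E_int: assumes [measurable]: "g \<in> borel_measurable borel"
  shows "(\<integral>\<^sup>+\<omega>. g (E i \<omega>) \<partial>M) = (\<integral>\<^sup>+x. ennreal (exponential_density l x) * g x \<partial>lborel)"
  using distributed_nn_integral[OF dist, of g] by simp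

lemma AE_Epos: "AE \<omega> in M. 0 < E i \<omega>"
proof -
  have "\<P>(x in M. E i x \<le> 0) = 1 - exp (- 0 * l)"
    by (rule exponential_distributedD_le[OF dist _ l]) simp
  then have "measure M {x\<in>space M. E i x \<le> 0} = 0" by simp
  then have "emeasure M {x\<in>space M. E i x \<le> 0} = 0" by (simp add: emeasure_eq_measure)
  then show ?thesis by (subst AE_iff_measurable[OF _ refl]) (auto simp: not_less)
qed

lemma AE_allpos: "AE \<omega> in M. \<forall>i. 0 < E i \<omega>"
  using AE_Epos by (simp add: AE_all_countable)

lemma AE_Spos: "AE \<omega> in M. 0 < Ssum E n \<omega>"
  using AE_allpos
proof eventually_elim
  case (elim \<omega>) then show ?case unfolding Ssum_def by (intro sum_pos) auto
qed

lemma Pprod_Suc: "Pprod E (Suc n) \<omega> = Pprod E n \<omega> * Ssum E n \<omega>"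
  by (simp add: Pprod_def)
lemma Ssum_Suc: "Ssum E (Suc n) \<omega> = Ssum E n \<omega> + E (Suc n) \<omega>"
  by (simp add: Ssum_def)

lemma MainL_base:
  assumes y: "0 < y" and h[measurable]: "h \<in> borel_measurable borel"
  shows "(\<integral>\<^sup>+\<omega>. indicator {..y} (Pprod E (Suc 0) \<omega>) * h (Ssum E 0 \<omega>) \<partial>M)
    = (\<integral>\<^sup>+u. indicator {0<..} u * h u * ennreal (l ^ Suc 0 * exp (- l * u) * Kd 0 u y) \<partial>lborel)"
proof -
  have "(\<integral>\<^sup>+\<omega>. indicator {..y} (Pprod E (Suc 0) \<omega>) * h (Ssum E 0 \<omega>) \<partial>M)
      = (\<integral>\<^sup>+\<omega>. indicator {..y} (E 0 \<omega>) * h (E 0 \<omega>) \<partial>M)"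
    by (simp add: Pprod_def Ssum_def)
  also have "\<dots> = (\<integral>\<^sup>+x. ennreal (exponential_density l x) * (indicator {..y} x * h x) \<partial>lborel)"
    by (rule E_int) measurable
  also have "\<dots> = (\<integral>\<^sup>+u. indicator {0<..} u * h u * ennreal (l ^ Suc 0 * exp (- l * u) * Kd 0 u y) \<partial>lborel)"
  proof (rule nn_integral_cong_AE)
    show "AE x in lborel. ennreal (exponential_density l x) * (indicator {..y} x * h x) =
          indicator {0<..} x * h x * ennreal (l ^ Suc 0 * exp (- l * x) * Kd 0 x y)"
      using AE_lborel_singleton[of 0]
    proof eventually_elim
      case (elim x)
      then consider "x < 0" | "0 < x" by linarith
      then show ?case
      proof cases
        case 1 then show ?thesis by (simp add: exponential_density_def)
      next
        case 2 then show ?thesis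
          by (auto simp: exponential_density_def Kd_def indicator_def mult.commute)
      qed
    qed
  qed
  finally show ?thesis .
qed

lemma pair_sf: "pair_sigma_finite M lborel"
  by (simp add: pair_sigma_finite_def sigma_finite_measure_axioms lborel.sigma_finite_measure_axioms)

lemma MainL:
  assumes "0 < y" and "h \<in> borel_measurable borel"
  shows "(\<integral>\<^sup>+\<omega>. indicator {..y} (Pprod E (Suc n) \<omega>) * h (Ssum E n \<omega>) \<partial>M)
    = (\<integral>\<^sup>+u. indicator {0<..} u * h u * ennreal (l ^ Suc n * exp (- l * u) * Kd n u y) \<partial>lborel)"
  using assms
proof (induction n arbitrary: y h)
  case 0 then show ?case by (rule MainL_base)
next
  case (Suc n)
  note y = \<open>0 < y\<close>
  note h[measurable] = \<open>h \<in> borel_measurable borel\<close>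
  interpret PS: pair_sigma_finite M lborel by (rule pair_sf)
  define S where "S = Ssum E n"
  define P where "P = Pprod E (Suc n)"
  have [measurable]: "S \<in> borel_measurable M" "P \<in> borel_measurable M" unfolding S_def P_def by measurable
  define G where "G = (\<lambda>(s::real, p::real, x::real). indicator {..y} (p * (s + x)) * h (s + x) :: ennreal)"
  have [measurable]: "G \<in> borel_measurable borel"
  proof -
    have "G \<in> borel_measurable (borel \<Otimes>\<^sub>M (borel \<Otimes>\<^sub>M borel))" unfolding G_def by measurable
    then show ?thesis by (simp add: borel_prod)
  qed
  define F where "F = (\<lambda>\<omega> v. ennreal (exponential_density l (v - S \<omega>)) * indicator {..y} (P \<omega> * v) * h v)"
  have Fm: "case_prod F \<in> borel_measurable (M \<Otimes>\<^sub>M lborel)" unfolding F_def by measurable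
  have "(\<integral>\<^sup>+\<omega>. indicator {..y} (Pprod E (Suc (Suc n)) \<omega>) * h (Ssum E (Suc n) \<omega>) \<partial>M)
      = (\<integral>\<^sup>+\<omega>. G (Ssum E n \<omega>, Pprod E (Suc n) \<omega>, E (Suc n) \<omega>) \<partial>M)"
    by (simp add: G_def Pprod_Suc[of "Suc n"] Ssum_Suc)
  also have "\<dots> = (\<integral>\<^sup>+\<omega>. (\<integral>\<^sup>+x. ennreal (exponential_density l x) * G (Ssum E n \<omega>, Pprod E (Suc n) \<omega>, x) \<partial>lborel) \<partial>M)"
    by (rule IS) measurable
  also have "\<dots> = (\<integral>\<^sup>+\<omega>. (\<integral>\<^sup>+v. F \<omega> v \<partial>lborel) \<partial>M)"
  proof (rule nn_integral_cong)
    fix \<omega> assume "\<omega> \<in> space M"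
    have Fw: "F \<omega> \<in> borel_measurable borel" unfolding F_def by measurable
    have "(\<integral>\<^sup>+v. F \<omega> v \<partial>lborel) = (\<integral>\<^sup>+x. F \<omega> (S \<omega> + x) \<partial>lborel)"
      using nn_integral_real_affine[OF Fw, of 1 "S \<omega>"] by simp
    also have "\<dots> = (\<integral>\<^sup>+x. ennreal (exponential_density l x) * G (Ssum E n \<omega>, Pprod E (Suc n) \<omega>, x) \<partial>lborel)"
      by (simp add: F_def G_def S_def P_def mult.assoc)
    finally show "(\<integral>\<^sup>+x. ennreal (exponential_density l x) * G (Ssum E n \<omega>, Pprod E (Suc n) \<omega>, x) \<partial>lborel) = (\<integral>\<^sup>+v. F \<omega> v \<partial>lborel)"
      by simp
  qed
  also have "\<dots> = (\<integral>\<^sup>+v. (\<integral>\<^sup>+\<omega>. F \<omega> v \<partial>M) \<partial>lborel)"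
    by (rule PS.Fubini'[OF Fm, symmetric])
  also have "\<dots> = (\<integral>\<^sup>+v. indicator {0<..} v * h v * ennreal (l ^ Suc (Suc n) * exp (- l * v) * Kd (Suc n) v y) \<partial>lborel)"
  proof (rule nn_integral_cong_AE)
    show "AE v in lborel. (\<integral>\<^sup>+\<omega>. F \<omega> v \<partial>M) = indicator {0<..} v * h v * ennreal (l ^ Suc (Suc n) * exp (- l * v) * Kd (Suc n) v y)"
      using AE_lborel_singleton[of 0]
    proof eventually_elim
      case (elim v)
      then consider "v < 0" | "0 < v" by linarith
      then show ?case
      proof cases
        case 1
        have "(\<integral>\<^sup>+\<omega>. F \<omega> v \<partial>M) = (\<integral>\<^sup>+\<omega>. 0 \<partial>M)"
        proof (rule nn_integral_cong_AE)
          show "AE \<omega> in M. F \<omega> v = 0"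
            using AE_Spos[of n]
          proof eventually_elim
            case (elim \<omega>) then show ?case using 1 by (simp add: F_def S_def exponential_density_def)
          qed
        qed
        then show ?thesis using 1 by simp
      next
        case 2
        define h' where "h' u = indicator {..v} u * ennreal (exp (l * u))" for u
        have [measurable]: "h' \<in> borel_measurable borel" unfolding h'_def by measurable
        have yv: "0 < y / v" using y 2 by simp
        have "(\<integral>\<^sup>+\<omega>. F \<omega> v \<partial>M) = (\<integral>\<^sup>+\<omega>. (ennreal (l * exp (- l * v)) * h v) * (indicator {..y / v} (P \<omega>) * h' (S \<omega>)) \<partial>M)"
        proof (rule nn_integral_cong)
          fix \<omega> assume "\<omega> \<in> space M"
          have e1: "indicator {..y} (P \<omega> * v) = (indicator {..y / v} (P \<omega>) :: ennreal)"
            using 2 by (simp add: indicator_def pos_le_divide_eq)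
          have e2: "ennreal (exponential_density l (v - S \<omega>)) = ennreal (l * exp (- l * v)) * (indicator {..v} (S \<omega>) * ennreal (exp (l * S \<omega>)))"
          proof (cases "S \<omega> \<le> v")
            case True
            then have "exponential_density l (v - S \<omega>) = (l * exp (- l * v)) * exp (l * S \<omega>)"
            proof -
              have "exp (- (v - S \<omega>) * l) = exp (- l * v) * exp (l * S \<omega>)"
                by (simp add: exp_add[symmetric] algebra_simps)
              then show ?thesis using True by (simp add: exponential_density_def)
            qed
            then show ?thesis using True l by (simp add: ennreal_mult)
          qed (simp add: exponential_density_def)
          show "F \<omega> v = (ennreal (l * exp (- l * v)) * h v) * (indicator {..y / v} (P \<omega>) * h' (S \<omega>))"
            unfolding F_def e1 e2 h'_def by (simp add: ac_simps)
        qed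
        also have "\<dots> = (ennreal (l * exp (- l * v)) * h v) * (\<integral>\<^sup>+\<omega>. indicator {..y / v} (P \<omega>) * h' (S \<omega>) \<partial>M)"
          by (rule nn_integral_cmult) measurable
        also have "(\<integral>\<^sup>+\<omega>. indicator {..y / v} (P \<omega>) * h' (S \<omega>) \<partial>M)
            = (\<integral>\<^sup>+u. indicator {0<..} u * h' u * ennreal (l ^ Suc n * exp (- l * u) * Kd n u (y / v)) \<partial>lborel)"
          unfolding P_def S_def by (rule Suc.IH[OF yv]) measurable
        also have "\<dots> = (\<integral>\<^sup>+u. ennreal (l ^ Suc n) * (ennreal (Kd n u (y / v)) * indicator {0<..v} u) \<partial>lborel)"
        proof (rule nn_integral_cong)
          fix u :: real
          show "indicator {0<..} u * h' u * ennreal (l ^ Suc n * exp (- l * u) * Kd n u (y / v)) =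
                ennreal (l ^ Suc n) * (ennreal (Kd n u (y / v)) * indicator {0<..v} u)"
          proof (cases "0 < u \<and> u \<le> v")
            case True
            have "ennreal (exp (l * u)) * ennreal (l ^ Suc n * exp (- l * u) * Kd n u (y / v))
                = ennreal (exp (l * u) * (l ^ Suc n * exp (- l * u) * Kd n u (y / v)))"
              using True Kd_nonneg[of u "y/v" n] yv l by (simp add: ennreal_mult)
            also have "exp (l * u) * (l ^ Suc n * exp (- l * u) * Kd n u (y / v)) = l ^ Suc n * Kd n u (y / v)"
              by (simp add: mult_exp_exp[symmetric] algebra_simps exp_minus_inverse)
            finally show ?thesis using True Kd_nonneg[of u "y/v" n] yv l
              by (simp add: h'_def indicator_def ennreal_mult)
          qed (auto simp: h'_def indicator_def)
        qed
        also have "\<dots> = ennreal (l ^ Suc n) * (\<integral>\<^sup>+u. ennreal (Kd n u (y / v)) * indicator {0<..v} u \<partial>lborel)"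
          by (rule nn_integral_cmult) measurable
        also have "(\<integral>\<^sup>+u. ennreal (Kd n u (y / v)) * indicator {0<..v} u \<partial>lborel) = ennreal (Kd (Suc n) v y)"
          by (rule ID[OF 2 y])
        finally have "(\<integral>\<^sup>+\<omega>. F \<omega> v \<partial>M) = ennreal (l * exp (- l * v)) * h v * (ennreal (l ^ Suc n) * ennreal (Kd (Suc n) v y))" .
        also have "\<dots> = h v * ennreal (l ^ Suc (Suc n) * exp (- l * v) * Kd (Suc n) v y)"
          using l Kd_nonneg[of v y "Suc n"] 2 y by (simp add: ennreal_mult[symmetric] ac_simps)
        finally show ?thesis using 2 by simp
      qed
    qed
  qed
  finally show ?case .
qed

lemma tail: assumes a: "0 \<le> a"
  shows "(\<integral>\<^sup>+x. ennreal (exponential_density l x) * indicator {a..} x \<partial>lborel) = ennreal (exp (- l * a))"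
proof -
  have "(\<integral>\<^sup>+x. ennreal (exponential_density l x) * indicator {a..} x \<partial>lborel)
      = (\<integral>\<^sup>+x. ennreal (exponential_density l x) * indicator {a<..} x \<partial>lborel)"
    by (rule nn_integral_cong_AE) (use AE_lborel_singleton[of a] in \<open>eventually_elim, auto simp: indicator_def\<close>)
  also have "\<dots> = emeasure M (E 0 -` {a<..} \<inter> space M)"
    by (rule distributed_emeasure[OF dist, symmetric]) simp
  also have "E 0 -` {a<..} \<inter> space M = {x\<in>space M. a < E 0 x}" by auto
  also have "emeasure M \<dots> = ennreal (\<P>(x in M. a < E 0 x))" by (simp add: emeasure_eq_measure)
  also have "\<P>(x in M. a < E 0 x) = exp (- a * l)" by (rule exponential_distributedD_gt[OF dist a l])
  finally show ?thesis by (simp add: mult.commute)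
qed

definition C :: "nat \<Rightarrow> real \<Rightarrow> 'a set" where
  "C n y = {\<omega> \<in> space M. (case n of 0 \<Rightarrow> True | Suc m \<Rightarrow> Ssum E m \<omega> < 1) \<and> 1 \<le> Ssum E n \<omega> \<and> Pprod E n \<omega> \<le> y}"

lemma C_sets[measurable]: "C n y \<in> sets M"
  unfolding C_def by (cases n) auto

lemma PC0: "emeasure M (C 0 y) = ennreal (l ^ 0 * exp (- l) * Kd 0 1 y)"
proof (cases "1 \<le> y")
  case True
  have "C 0 y = {x\<in>space M. 1 \<le> E 0 x}" using True by (auto simp: C_def Ssum_def Pprod_def)
  then have "emeasure M (C 0 y) = emeasure M {x\<in>space M. 1 \<le> E 0 x}" by simp
  also have "\<dots> = (\<integral>\<^sup>+\<omega>. indicator {x\<in>space M. 1 \<le> E 0 x} \<omega> \<partial>M)"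
    by (rule nn_integral_indicator[symmetric]) measurable
  also have "\<dots> = (\<integral>\<^sup>+\<omega>. indicator {1..} (E 0 \<omega>) \<partial>M)"
    by (intro nn_integral_cong) (auto simp: indicator_def)
  also have "\<dots> = (\<integral>\<^sup>+x. ennreal (exponential_density l x) * indicator {1..} x \<partial>lborel)"
    by (rule E_int) measurable
  also have "\<dots> = ennreal (exp (- l))" using tail[of 1] by simp
  finally show ?thesis using True by (simp add: Kd_def)
next
  case False
  then have "C 0 y = {}" by (auto simp: C_def Pprod_def)
  then show ?thesis using False by (simp add: Kd_def)
qed

lemma PCSuc: assumes y: "0 < y"
  shows "emeasure M (C (Suc m) y) = ennreal (l ^ Suc m * exp (- l) * Kd (Suc m) 1 y)"
proof -
  define G where "G = (\<lambda>(s::real, p::real, x::real). indicator {..<1} s * indicator {1..} (s + x) * indicator {..y} p :: ennreal)"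
  have [measurable]: "G \<in> borel_measurable borel"
  proof -
    have "G \<in> borel_measurable (borel \<Otimes>\<^sub>M (borel \<Otimes>\<^sub>M borel))" unfolding G_def by measurable
    then show ?thesis by (simp add: borel_prod)
  qed
  define h where "h u = indicator {..<1} u * ennreal (exp (- l * (1 - u)))" for u
  have [measurable]: "h \<in> borel_measurable borel" unfolding h_def by measurable
  have "emeasure M (C (Suc m) y) = (\<integral>\<^sup>+\<omega>. indicator (C (Suc m) y) \<omega> \<partial>M)"
    by (rule nn_integral_indicator[symmetric]) measurable
  also have "\<dots> = (\<integral>\<^sup>+\<omega>. G (Ssum E m \<omega>, Pprod E (Suc m) \<omega>, E (Suc m) \<omega>) \<partial>M)"
    by (intro nn_integral_cong) (auto simp: indicator_def C_def G_def Ssum_Suc)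
  also have "\<dots> = (\<integral>\<^sup>+\<omega>. (\<integral>\<^sup>+x. ennreal (exponential_density l x) * G (Ssum E m \<omega>, Pprod E (Suc m) \<omega>, x) \<partial>lborel) \<partial>M)"
    by (rule IS) measurable
  also have "\<dots> = (\<integral>\<^sup>+\<omega>. indicator {..y} (Pprod E (Suc m) \<omega>) * h (Ssum E m \<omega>) \<partial>M)"
  proof (rule nn_integral_cong)
    fix \<omega> assume "\<omega> \<in> space M"
    define s where "s = Ssum E m \<omega>"
    define p where "p = Pprod E (Suc m) \<omega>"
    have "(\<integral>\<^sup>+x. ennreal (exponential_density l x) * G (s, p, x) \<partial>lborel) = indicator {..y} p * h s"
    proof (cases "s < 1")
      case True
      have "(\<integral>\<^sup>+x. ennreal (exponential_density l x) * G (s, p, x) \<partial>lborel)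
          = (\<integral>\<^sup>+x. indicator {..y} p * (ennreal (exponential_density l x) * indicator {1 - s..} x) \<partial>lborel)"
        using True by (intro nn_integral_cong) (auto simp: G_def indicator_def)
      also have "\<dots> = indicator {..y} p * (\<integral>\<^sup>+x. ennreal (exponential_density l x) * indicator {1 - s..} x \<partial>lborel)"
        by (rule nn_integral_cmult) measurable
      also have "\<dots> = indicator {..y} p * ennreal (exp (- l * (1 - s)))"
        using True tail[of "1 - s"] by simp
      finally show ?thesis using True by (simp add: h_def)
    next
      case False
      then show ?thesis by (simp add: G_def h_def)
    qed
    then show "(\<integral>\<^sup>+x. ennreal (exponential_density l x) * G (Ssum E m \<omega>, Pprod E (Suc m) \<omega>, x) \<partial>lborel) = indicator {..y} (Pprod E (Suc m) \<omega>) * h (Ssum E m \<omega>)"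
      by (simp add: s_def p_def)
  qed
  also have "\<dots> = (\<integral>\<^sup>+u. indicator {0<..} u * h u * ennreal (l ^ Suc m * exp (- l * u) * Kd m u y) \<partial>lborel)"
    by (rule MainL[OF y]) measurable
  also have "\<dots> = (\<integral>\<^sup>+u. ennreal (l ^ Suc m * exp (- l)) * (ennreal (Kd m u (y / 1)) * indicator {0<..1} u) \<partial>lborel)"
  proof (rule nn_integral_cong_AE)
    show "AE u in lborel. indicator {0<..} u * h u * ennreal (l ^ Suc m * exp (- l * u) * Kd m u y) =
        ennreal (l ^ Suc m * exp (- l)) * (ennreal (Kd m u (y / 1)) * indicator {0<..1} u)"
      using AE_lborel_singleton[of 1]
    proof eventually_elim
      case (elim u)
      show ?case
      proof (cases "0 < u \<and> u < 1")
        case True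
        have "exp (- l * (1 - u)) * (l ^ Suc m * exp (- l * u) * Kd m u y) = l ^ Suc m * exp (- l) * Kd m u y"
        proof -
          have "exp (- l * (1 - u)) * exp (- l * u) = exp (- l)" by (simp add: exp_add[symmetric] algebra_simps)
          then show ?thesis by (metis (no_types, lifting) mult.assoc mult.left_commute)
        qed
        then show ?thesis using True Kd_nonneg[of u y m] y l
          by (simp add: h_def indicator_def ennreal_mult[symmetric])
      qed (use elim in \<open>auto simp: h_def indicator_def\<close>)
    qed
  qed
  also have "\<dots> = ennreal (l ^ Suc m * exp (- l)) * (\<integral>\<^sup>+u. ennreal (Kd m u (y / 1)) * indicator {0<..1} u \<partial>lborel)"
    by (rule nn_integral_cmult) measurable
  also have "\<dots> = ennreal (l ^ Suc m * exp (- l)) * ennreal (Kd (Suc m) 1 y)"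
    using ID[of 1 y m] y by simp
  also have "\<dots> = ennreal (l ^ Suc m * exp (- l) * Kd (Suc m) 1 y)"
    using l Kd_nonneg[of 1 y "Suc m"] y by (simp add: ennreal_mult[symmetric])
  finally show ?thesis .
qed

lemma PC: "0 < y \<Longrightarrow> emeasure M (C n y) = ennreal (l ^ n * exp (- l) * Kd n 1 y)"
  using PC0 PCSuc by (cases n) auto

end


lemma exp_series: "(\<lambda>k. x ^ k / fact k) sums exp (x::real)"
  using exp_converges[of x] by (simp add: divide_inverse mult.commute)

lemma pmf_poisson: assumes "0 \<le> mu" shows "pmf (poisson_pmf mu) k = exp (- mu) * mu ^ k / fact k"
  unfolding poisson_pmf_def
proof (rule pmf_embed_pmf)
  show "\<And>x. 0 \<le> exp (- mu) * mu ^ x / fact x" using assms by simp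
  have s: "(\<lambda>k. exp (- mu) * mu ^ k / fact k) sums (exp (- mu) * exp mu)"
    using sums_mult[OF exp_series[of mu], of "exp (- mu)"] by (simp add: mult.assoc)
  have "(\<integral>\<^sup>+x. ennreal (exp (- mu) * mu ^ x / fact x) \<partial>count_space UNIV) = (\<Sum>x. ennreal (exp (- mu) * mu ^ x / fact x))"
    by (rule nn_integral_count_space_nat)
  also have "\<dots> = ennreal (\<Sum>x. exp (- mu) * mu ^ x / fact x)"
    using s assms by (intro suminf_ennreal2) (auto simp: sums_iff)
  also have "(\<Sum>x. exp (- mu) * mu ^ x / fact x) = 1" using s by (simp add: sums_iff mult_exp_exp)
  finally show "(\<integral>\<^sup>+x. ennreal (exp (- mu) * mu ^ x / fact x) \<partial>count_space UNIV) = 1" by simp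
qed

lemma convergent_prod_iff':
  "convergent_prod (g :: nat \<Rightarrow> real) \<longleftrightarrow> (\<exists>N. Cauchy (\<lambda>n. \<Prod>i\<le>n. g (i+N)) \<and> lim (\<lambda>n. \<Prod>i\<le>n. g (i+N)) \<noteq> 0)"
  unfolding convergent_prod_def raw_has_prod_def Cauchy_convergent_iff convergent_def
  by (auto dest: limI)

lemma prodinf_eq_if:
  "prodinf (g :: nat \<Rightarrow> real) = (if convergent_prod g then lim (\<lambda>n. \<Prod>i\<le>n. g i) else (THE p. False))"
proof (cases "convergent_prod g")
  case True then show ?thesis using convergent_prod_LIMSEQ[OF True] by (simp add: limI)
next
  case False
  then have "\<And>p. \<not> g has_prod p" by (auto simp: has_prod_iff)
  then have e: "(has_prod) g = (\<lambda>p. False)" by (auto simp: fun_eq_iff)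
  show ?thesis using False unfolding prodinf_def e by simp
qed

lemma prodinf_meas:
  fixes f :: "nat \<Rightarrow> 'a \<Rightarrow> real"
  assumes [measurable]: "\<And>i. f i \<in> borel_measurable M"
  shows "(\<lambda>\<omega>. prodinf (\<lambda>i. f i \<omega>)) \<in> borel_measurable M"
proof -
  have [measurable]: "Measurable.pred M (\<lambda>\<omega>. convergent_prod (\<lambda>i. f i \<omega>))"
    unfolding convergent_prod_iff' by measurable
  show ?thesis unfolding prodinf_eq_if by measurable
qed

lemma Kd_1_1: "Kd n 1 1 = 1 / fact n" by (simp add: Kd_def)

lemma Kd_1_t: "0 < t \<Longrightarrow> t < 1 \<Longrightarrow> Kd n 1 t = t / fact n * (\<Sum>j<n. (- ln t) ^ j / fact j)"
  by (simp add: Kd_def)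

context expseq begin

definition X :: "'a \<Rightarrow> real" where "X \<omega> = prodinf (\<lambda>i. min (Ssum E i \<omega>) 1)"

lemma X_meas[measurable]: "X \<in> borel_measurable M"
  unfolding X_def[abs_def] by (rule prodinf_meas) measurable

lemma S_mono: assumes "\<forall>i. 0 < E i \<omega>" "i \<le> j" shows "Ssum E i \<omega> \<le> Ssum E j \<omega>"
proof -
  have "\<forall>i. 0 \<le> E i \<omega>" using assms(1) by (simp add: less_imp_le)
  then show ?thesis unfolding Ssum_def using assms(2) by (intro sum_mono2) auto
qed

lemma X_on_C: assumes pos: "\<forall>i. 0 < E i \<omega>" and c: "\<omega> \<in> C n 1" shows "X \<omega> = Pprod E n \<omega>"
proof -
  have lt: "Ssum E i \<omega> < 1" if "i < n" for i
  proof (cases n)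
    case (Suc m)
    then have "Ssum E m \<omega> < 1" using c by (simp add: C_def)
    moreover have "Ssum E i \<omega> \<le> Ssum E m \<omega>" using that Suc by (intro S_mono[OF pos]) auto
    ultimately show ?thesis by linarith
  qed (use that in simp)
  have ge: "1 \<le> Ssum E i \<omega>" if "n \<le> i" for i
  proof -
    have "1 \<le> Ssum E n \<omega>" using c by (simp add: C_def)
    also have "\<dots> \<le> Ssum E i \<omega>" by (rule S_mono[OF pos that])
    finally show ?thesis .
  qed
  have "X \<omega> = (\<Prod>i\<in>{..<n}. min (Ssum E i \<omega>) 1)"
    unfolding X_def by (rule prodinf_finite) (use ge in auto)
  also have "\<dots> = Pprod E n \<omega>" unfolding Pprod_def by (rule prod.cong) (use lt in auto)
  finally show ?thesis .
qed

lemma C_disj: assumes pos: "\<forall>i. 0 < E i \<omega>" and "\<omega> \<in> C n 1" "\<omega> \<in> C k 1" shows "n = k"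
proof -
  have *: False if "\<omega> \<in> C a 1" "\<omega> \<in> C b 1" "a < b" for a b
  proof -
    obtain m where m: "b = Suc m" using \<open>a < b\<close> by (cases b) auto
    have "Ssum E m \<omega> < 1" using that(2) m by (simp add: C_def)
    moreover have "1 \<le> Ssum E a \<omega>" using that(1) by (simp add: C_def)
    moreover have "Ssum E a \<omega> \<le> Ssum E m \<omega>" using m \<open>a < b\<close> by (intro S_mono[OF pos]) auto
    ultimately show False by linarith
  qed
  show ?thesis using *[of n k] *[of k n] assms by (cases "n < k"; cases "k < n") auto
qed


lemma final:
  assumes t: "0 < t" "t < 1"
  shows "emeasure M {\<omega>\<in>space M. X \<omega> \<le> t} = (\<Sum>n. ennreal (l ^ n * exp (- l) * Kd n 1 t))"
proof -
  define Good where "Good = {\<omega>\<in>space M. \<forall>i. 0 < E i \<omega>}"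
  have Good_sets[measurable]: "Good \<in> sets M" unfolding Good_def by measurable
  have AEG: "AE \<omega> in M. \<omega> \<in> Good"
    using AE_allpos AE_space by eventually_elim (auto simp: Good_def)
  define D where "D n = C n 1 \<inter> Good" for n
  have D_sets[measurable]: "D n \<in> sets M" for n unfolding D_def by measurable
  have disjD: "disjoint_family D"
    unfolding disjoint_family_on_def D_def Good_def using C_disj by blast
  have eD: "emeasure M (D n) = ennreal (exp (- l) * l ^ n / fact n)" for n
  proof -
    have "emeasure M (D n) = emeasure M (C n 1)"
      by (rule emeasure_eq_AE) (use AEG in \<open>auto simp: D_def\<close>)
    also have "\<dots> = ennreal (exp (- l) * l ^ n / fact n)" by (simp add: PC Kd_1_1 mult.commute)
    finally show ?thesis .
  qed
  have s: "(\<lambda>n. exp (- l) * l ^ n / fact n) sums (exp (- l) * exp l)"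
    using sums_mult[OF exp_series[of l], of "exp (- l)"] by (simp add: mult.assoc)
  have "emeasure M (\<Union>n. D n) = (\<Sum>n. emeasure M (D n))"
    by (rule suminf_emeasure[symmetric]) (use disjD in auto)
  also have "\<dots> = (\<Sum>n. ennreal (exp (- l) * l ^ n / fact n))" by (simp add: eD)
  also have "\<dots> = ennreal (\<Sum>n. exp (- l) * l ^ n / fact n)"
    using s l by (intro suminf_ennreal2) (auto simp: sums_iff)
  also have "(\<Sum>n. exp (- l) * l ^ n / fact n) = 1" using s by (simp add: sums_iff mult_exp_exp)
  finally have "emeasure M (\<Union>n. D n) = 1" by simp
  then have "prob (\<Union>n. D n) = 1" by (simp add: emeasure_eq_measure)
  then have AEU: "AE \<omega> in M. \<omega> \<in> (\<Union>n. D n)" by (subst AE_in_set_eq_1) auto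
  have Ct_sub: "C n t \<subseteq> C n 1" for n using t by (auto simp: C_def)
  have "emeasure M {\<omega>\<in>space M. X \<omega> \<le> t} = emeasure M (\<Union>n. C n t \<inter> Good)"
  proof (rule emeasure_eq_AE)
    show "AE \<omega> in M. (\<omega> \<in> {\<omega>\<in>space M. X \<omega> \<le> t}) = (\<omega> \<in> (\<Union>n. C n t \<inter> Good))"
      using AEU
    proof eventually_elim
      case (elim \<omega>)
      then obtain n where n: "\<omega> \<in> C n 1" and g: "\<omega> \<in> Good" by (auto simp: D_def)
      have pos: "\<forall>i. 0 < E i \<omega>" and sp: "\<omega> \<in> space M" using g by (auto simp: Good_def)
      have Xw: "X \<omega> = Pprod E n \<omega>" by (rule X_on_C[OF pos n])
      show ?case
      proof
        assume "\<omega> \<in> {\<omega>\<in>space M. X \<omega> \<le> t}"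
        then have "\<omega> \<in> C n t" using n Xw by (simp add: C_def)
        then show "\<omega> \<in> (\<Union>n. C n t \<inter> Good)" using g by auto
      next
        assume "\<omega> \<in> (\<Union>n. C n t \<inter> Good)"
        then obtain k where k: "\<omega> \<in> C k t" by auto
        then have "k = n" using C_disj[OF pos _ n] Ct_sub by blast
        then show "\<omega> \<in> {\<omega>\<in>space M. X \<omega> \<le> t}" using k Xw sp by (simp add: C_def)
      qed
    qed
  qed auto
  also have "\<dots> = (\<Sum>n. emeasure M (C n t \<inter> Good))"
  proof (rule suminf_emeasure[symmetric])
    show "disjoint_family (\<lambda>n. C n t \<inter> Good)"
      using disjD Ct_sub unfolding disjoint_family_on_def D_def by blast
  qed auto
  also have "\<dots> = (\<Sum>n. emeasure M (C n t))"
  proof (rule suminf_cong)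
    fix n show "emeasure M (C n t \<inter> Good) = emeasure M (C n t)"
      by (rule emeasure_eq_AE) (use AEG in auto)
  qed
  also have "\<dots> = (\<Sum>n. ennreal (l ^ n * exp (- l) * Kd n 1 t))"
    using t by (simp add: PC)
  finally show ?thesis .
qed

end


lemma rhs:
  assumes t: "0 < t" "t < 1" and l: "0 < l"
  shows "emeasure (measure_pmf (pair_pmf (poisson_pmf l) (poisson_pmf (- ln t)))) {(n, m). m < n}
    = (\<Sum>n. ennreal (l ^ n * exp (- l) * Kd n 1 t))"
proof -
  define A where "A = poisson_pmf l"
  define B where "B = poisson_pmf (- ln t)"
  have mu: "0 \<le> - ln t" using t by simp
  have "emeasure (measure_pmf (pair_pmf A B)) {(n, m). m < n} = (\<integral>\<^sup>+x. indicator {(n, m). m < n} x \<partial>measure_pmf (pair_pmf A B))"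
    by (rule nn_integral_indicator[symmetric]) simp
  also have "\<dots> = (\<integral>\<^sup>+a. \<integral>\<^sup>+b. indicator {(n, m). m < n} (a, b) \<partial>B \<partial>A)"
    by (rule nn_integral_pair_pmf')
  also have "\<dots> = (\<integral>\<^sup>+a. ennreal (\<Sum>m<a. pmf B m) \<partial>A)"
  proof (rule nn_integral_cong)
    fix a :: nat
    have "(\<integral>\<^sup>+b. indicator {(n, m). m < n} (a, b) \<partial>B) = (\<integral>\<^sup>+b. indicator {..<a} b \<partial>B)"
      by (rule nn_integral_cong) (auto simp: indicator_def)
    also have "\<dots> = emeasure (measure_pmf B) {..<a}" by (rule nn_integral_indicator) simp
    also have "\<dots> = ennreal (\<Sum>m<a. pmf B m)"
      by (simp add: emeasure_measure_pmf_finite sum_ennreal)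
    finally show "(\<integral>\<^sup>+b. indicator {(n, m). m < n} (a, b) \<partial>B) = ennreal (\<Sum>m<a. pmf B m)" .
  qed
  also have "\<dots> = (\<Sum>n. ennreal (pmf A n) * ennreal (\<Sum>m<n. pmf B m))"
    by (simp add: nn_integral_measure_pmf nn_integral_count_space_nat)
  also have "\<dots> = (\<Sum>n. ennreal (l ^ n * exp (- l) * Kd n 1 t))"
  proof (rule suminf_cong)
    fix n
    have "(\<Sum>m<n. pmf B m) = (\<Sum>m<n. t * (- ln t) ^ m / fact m)"
      unfolding B_def using mu t by (intro sum.cong) (auto simp: pmf_poisson)
    also have "\<dots> = t * (\<Sum>m<n. (- ln t) ^ m / fact m)" by (simp add: sum_distrib_left)
    finally have sB: "(\<Sum>m<n. pmf B m) = t * (\<Sum>m<n. (- ln t) ^ m / fact m)" .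
    have pA: "pmf A n = exp (- l) * l ^ n / fact n" unfolding A_def using l by (simp add: pmf_poisson)
    have "ennreal (pmf A n) * ennreal (\<Sum>m<n. pmf B m) = ennreal (pmf A n * (\<Sum>m<n. pmf B m))"
      by (rule ennreal_mult[symmetric]) (auto intro: sum_nonneg)
    also have "pmf A n * (\<Sum>m<n. pmf B m) = l ^ n * exp (- l) * Kd n 1 t"
      unfolding pA sB Kd_1_t[OF t] by (simp add: field_simps)
    finally show "ennreal (pmf A n) * ennreal (\<Sum>m<n. pmf B m) = ennreal (l ^ n * exp (- l) * Kd n 1 t)" .
  qed
  finally show ?thesis by (simp add: A_def B_def)
qed

theorem theorem2:
  fixes M :: "'a measure" and E :: "nat \<Rightarrow> 'a \<Rightarrow> real" and l t :: real
  assumes "prob_space M"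
    and "0 < l"
    and "prob_space.indep_vars M (\<lambda>_. borel) E UNIV"
    and "\<And>i. distributed M lborel (E i) (exponential_density l)"
    and "0 < t" and "t < 1"
  shows "measure M {\<omega> \<in> space M. (\<Prod>i. min (\<Sum>k\<le>i. E k \<omega>) 1) \<le> t}
         = measure_pmf.prob (pair_pmf (poisson_pmf l) (poisson_pmf (- ln t))) {(n, m). m < n}"
proof -
  interpret expseq M E l
    using assms by (simp add: expseq_def expseq_axioms_def)
  have "{\<omega> \<in> space M. (\<Prod>i. min (\<Sum>k\<le>i. E k \<omega>) 1) \<le> t} = {\<omega>\<in>space M. X \<omega> \<le> t}"
    by (simp add: X_def Ssum_def)
  then have "emeasure M {\<omega> \<in> space M. (\<Prod>i. min (\<Sum>k\<le>i. E k \<omega>) 1) \<le> t}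
     = emeasure (measure_pmf (pair_pmf (poisson_pmf l) (poisson_pmf (- ln t)))) {(n, m). m < n}"
    using final[OF assms(5,6)] rhs[OF assms(5,6,2)] by simp
  then show ?thesis by (simp add: measure_def)
qed

end
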